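(* Let $X$ be a real Banach space, $Y$ a (closed linear) subspace of $X$, $N\in\mathbb{N}$, and $f:[0,\infty)^N\to[0,\infty)$ a convex monotone function. Then the map $\mathrm{rad}_Y^f:(\mathcal{F}_N(X),d)\to[0,\infty)$ is Lipschitz continuous on bounded subsets of $\mathcal{F}_N(X)$.
   Context: $\mathcal{F}_N(X)$ is the set of subsets of $X$ of cardinality $N$, each written (with a fixed enumeration) as $\{x_1,\dots,x_N\}$, with the metric $d(F_1,F_2)=\max_{1\le i\le N}\|x_i-x_i'\|$ for $F_1=\{x_1,\dots,x_N\}$, $F_2=\{x_1',\dots,x_N'\}$. $f$ is monotone if $a\le b$ coordinatewise implies $f(a)\le f(b)$. For $F=\{x_1,\dots,x_N\}$, $r_f(y,F)=f(\|y-x_1\|,\dots,\|y-x_N\|)$ and $\mathrm{rad}_Y^f(F)=\inf_{y\in Y}r_f(y,F)$. *)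

theory Defs
  imports "HOL-Analysis.Analysis"
begin

text \<open>An element of F_N(X) is an N-element subset of X together with its fixed
enumeration; we represent it as an injective map from the finite index type 'n
(with CARD('n) = N) into X.\<close>

definition FN :: "('n::finite \<Rightarrow> 'a) set" where
  "FN = {F. inj F}"

definition fdist :: "('n::finite \<Rightarrow> 'a::real_normed_vector) \<Rightarrow> ('n \<Rightarrow> 'a) \<Rightarrow> real" where
  "fdist F1 F2 = Max (range (\<lambda>i. norm (F1 i - F2 i)))"

definition nonneg_orthant :: "(real^'n::finite) set" where
  "nonneg_orthant = {a. \<forall>i. 0 \<le> a $ i}"

definition monotone_orthant :: "(real^'n::finite \<Rightarrow> real) \<Rightarrow> bool" where
  "monotone_orthant f \<longleftrightarrow>
     (\<forall>a\<in>nonneg_orthant. \<forall>b\<in>nonneg_orthant. (\<forall>i. a $ i \<le> b $ i) \<longrightarrow> f a \<le> f b)"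

definition r_f :: "(real^'n::finite \<Rightarrow> real) \<Rightarrow> 'a::real_normed_vector \<Rightarrow> ('n \<Rightarrow> 'a) \<Rightarrow> real" where
  "r_f f y F = f (\<chi> i. norm (y - F i))"

definition rad :: "'a::real_normed_vector set \<Rightarrow> (real^'n::finite \<Rightarrow> real) \<Rightarrow> ('n \<Rightarrow> 'a) \<Rightarrow> real" where
  "rad Y f F = (INF y\<in>Y. r_f f y F)"

end

theory Submission
  imports Defs
begin

lemma fdist_ge: "norm (F1 i - F2 i) \<le> fdist (F1::'n::finite \<Rightarrow> 'a::real_normed_vector) F2"
  unfolding fdist_def by (rule Max_ge) auto

lemma key:
  fixes Y :: "'a::real_normed_vector set"
    and f :: "real^'n::finite \<Rightarrow> real"
  assumes Y: "subspace Y"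
    and cvx: "convex_on nonneg_orthant f"
    and mono: "monotone_orthant f"
    and nn: "\<forall>a\<in>nonneg_orthant. 0 \<le> f a"
    and R: "\<forall>i. norm (F2 i) \<le> R" "0 \<le> R"
  shows "rad Y f F2 \<le> rad Y f F1 + f (\<chi> i. R + 1) * fdist F1 F2"
proof -
  define d where "d = fdist F1 F2"
  have d0: "0 \<le> d" unfolding d_def by (rule order_trans[OF norm_ge_zero fdist_ge])
  have dle: "\<And>i. norm (F1 i - F2 i) \<le> d" unfolding d_def by (rule fdist_ge)
  define w :: "real^'n" where "w = (\<chi> i. R + 1)"
  define t where "t = d / (1 + d)"
  define l where "l = 1 / (1 + d)"
  have t01: "0 \<le> t" "t \<le> 1" using d0 unfolding t_def by auto
  have lt: "l = 1 - t" using d0 unfolding l_def t_def by (simp add: field_simps)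
  have ld: "l * d = t" using d0 unfolding l_def t_def by (simp add: field_simps)
  have tle: "t \<le> d" using d0 unfolding t_def by (simp add: field_simps mult_left_mono)
  have win: "w \<in> nonneg_orthant" using R unfolding w_def nonneg_orthant_def by auto
  have fw: "0 \<le> f w" using nn win by auto
  have bdd: "bdd_below ((\<lambda>y. r_f f y F2) ` Y)"
    unfolding r_f_def using nn by (intro bdd_belowI2[of _ 0]) (auto simp: nonneg_orthant_def)
  have ne: "Y \<noteq> {}" using Y subspace_0 by auto
  have main: "rad Y f F2 - f w * d \<le> r_f f y F1" if y: "y \<in> Y" for y
  proof -
    define a :: "real^'n" where "a = (\<chi> i. norm (y - F1 i))"
    define v :: "real^'n" where "v = (\<chi> i. norm (l *\<^sub>R y - F2 i))"
    have ain: "a \<in> nonneg_orthant" unfolding a_def nonneg_orthant_def by auto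
    have vin: "v \<in> nonneg_orthant" unfolding v_def nonneg_orthant_def by auto
    have cin: "(1 - t) *\<^sub>R a + t *\<^sub>R w \<in> nonneg_orthant"
      using ain win t01 unfolding nonneg_orthant_def by auto
    have le: "v $ i \<le> ((1 - t) *\<^sub>R a + t *\<^sub>R w) $ i" for i
    proof -
      have e: "l *\<^sub>R y - F2 i = l *\<^sub>R (y - F2 i) - t *\<^sub>R F2 i"
        using lt by (simp add: algebra_simps flip: scaleR_add_left)
      have "norm (l *\<^sub>R y - F2 i) \<le> l * norm (y - F2 i) + t * norm (F2 i)"
        unfolding e using t01 d0 lt
        by (metis (no_types, opaque_lifting) abs_of_nonneg norm_scaleR norm_triangle_ineq4 l_def
            divide_nonneg_nonneg zero_le_one add_nonneg_nonneg)
      moreover have "norm (y - F2 i) \<le> norm (y - F1 i) + d"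
        using dle[of i] norm_triangle_ineq[of "y - F1 i" "F1 i - F2 i"] by simp
      moreover have "0 \<le> l" using d0 unfolding l_def by simp
      ultimately have "norm (l *\<^sub>R y - F2 i) \<le> l * (norm (y - F1 i) + d) + t * R"
        using R(1)[rule_format, of i] t01
        by (smt (verit) mult_left_mono)
      also have "\<dots> = (1 - t) * norm (y - F1 i) + t * (R + 1)"
      proof -
        have h: "l * (norm (y - F1 i) + d) = l * norm (y - F1 i) + t" by (metis ld distrib_left)
        have "l * (norm (y - F1 i) + d) + t * R = l * norm (y - F1 i) + t + t * R" using h by simp
        also have "\<dots> = (1 - t) * norm (y - F1 i) + t * (R + 1)" unfolding lt by (simp add: algebra_simps)
        finally show ?thesis .
      qed
      finally show ?thesis unfolding v_def a_def w_def by simp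
    qed
    have "r_f f (l *\<^sub>R y) F2 = f v" unfolding r_f_def v_def by simp
    also have "\<dots> \<le> f ((1 - t) *\<^sub>R a + t *\<^sub>R w)"
      using mono vin cin le unfolding monotone_orthant_def by blast
    also have "\<dots> \<le> (1 - t) * f a + t * f w"
      using convex_onD[OF cvx] t01 ain win by blast
    also have "\<dots> \<le> f a + d * f w"
      using t01 tle fw nn ain by (smt (verit) mult_right_mono mult_left_le_one_le)
    finally have 1: "r_f f (l *\<^sub>R y) F2 \<le> r_f f y F1 + d * f w"
      unfolding r_f_def a_def by simp
    have "rad Y f F2 \<le> r_f f (l *\<^sub>R y) F2"
      unfolding rad_def using bdd Y y by (intro cINF_lower) (auto simp: subspace_scale)
    with 1 show ?thesis by (simp add: algebra_simps)
  qed
  have "rad Y f F2 - f w * d \<le> rad Y f F1"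
    unfolding rad_def[of Y f F1] using ne main by (intro cINF_greatest) auto
  then show ?thesis unfolding w_def d_def by simp
qed

theorem proposition4p3:
  fixes Y :: "'a::banach set"
    and f :: "real^'n::finite \<Rightarrow> real"
    and B :: "('n \<Rightarrow> 'a) set"
  assumes "subspace Y" and "closed Y"
    and "convex_on nonneg_orthant f"
    and "monotone_orthant f"
    and "\<forall>a\<in>nonneg_orthant. 0 \<le> f a"
    and "B \<subseteq> FN"
    and "\<exists>C. \<forall>F1\<in>B. \<forall>F2\<in>B. fdist F1 F2 \<le> C"
  shows "\<exists>L. \<forall>F1\<in>B. \<forall>F2\<in>B. \<bar>rad Y f F1 - rad Y f F2\<bar> \<le> L * fdist F1 F2"
proof (cases "B = {}")
  case True then show ?thesis by auto
next
  case False
  then obtain F0 where F0: "F0 \<in> B" by auto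
  obtain C where C: "\<forall>F1\<in>B. \<forall>F2\<in>B. fdist F1 F2 \<le> C" using assms(7) by auto
  define R where "R = \<bar>C\<bar> + Max (range (\<lambda>i. norm (F0 i)))"
  have "norm (F0 undefined) \<le> Max (range (\<lambda>i. norm (F0 i)))" by (rule Max_ge) auto
  then have R0: "0 \<le> R" unfolding R_def
    by (smt (verit) norm_ge_zero)
  have Rb: "\<forall>i. norm (F i) \<le> R" if "F \<in> B" for F
  proof
    fix i
    have "norm (F i - F0 i) \<le> C" using fdist_ge[of F i F0] C that F0 by (meson order_trans)
    moreover have "norm (F0 i) \<le> Max (range (\<lambda>i. norm (F0 i)))" by (rule Max_ge) auto
    moreover have "norm (F i) \<le> norm (F i - F0 i) + norm (F0 i)"
      using norm_triangle_ineq[of "F i - F0 i" "F0 i"] by simp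
    ultimately show "norm (F i) \<le> R" unfolding R_def by linarith
  qed
  show ?thesis
  proof (intro exI ballI)
    fix F1 F2 assume F1: "F1 \<in> B" and F2: "F2 \<in> B"
    have a: "rad Y f F2 \<le> rad Y f F1 + f (\<chi> i. R + 1) * fdist F1 F2"
      using key[OF assms(1,3,4,5) Rb[OF F2] R0] .
    have b: "rad Y f F1 \<le> rad Y f F2 + f (\<chi> i. R + 1) * fdist F2 F1"
      using key[OF assms(1,3,4,5) Rb[OF F1] R0] .
    have "fdist F2 F1 = fdist F1 F2" unfolding fdist_def by (simp add: norm_minus_commute)
    with b have b': "rad Y f F1 \<le> rad Y f F2 + f (\<chi> i. R + 1) * fdist F1 F2" by simp
    from a b' show "\<bar>rad Y f F1 - rad Y f F2\<bar> \<le> f (\<chi> i. R + 1) * fdist F1 F2"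
      unfolding abs_le_iff by linarith
  qed
qed

end
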